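(* Assume that the pair $(\mathcal P,\mathcal P')$ gives $(G,N,\theta)_{\mathcal H}\ge_c(H,M,\varphi)_{\mathcal H}$. Let $U\le\mathbb C^\times$ be the group of roots of unity. If $\epsilon:G_\theta\to U$ is any map that is constant on $N$-cosets and satisfies $\epsilon(1)=1$, then the pair $(\epsilon\mathcal P,\epsilon_{H_\theta}\mathcal P')$ also gives $(G,N,\theta)_{\mathcal H}\ge_c(H,M,\varphi)_{\mathcal H}$, where $(\epsilon\mathcal P)(x)=\epsilon(x)\mathcal P(x)$ and $\epsilon_{H_\theta}$ is the restriction of $\epsilon$ to $H_\theta$.
   Context: All groups are finite; $p$ is a fixed prime. $\mathbb Q^{\mathrm{ab}}\subseteq\mathbb C$ is generated by all roots of unity, $\mathcal G=\mathrm{Gal}(\mathbb Q^{\mathrm{ab}}/\mathbb Q)$, $\mathcal H\le\mathcal G$ consists of those $\sigma$ for which there is an integer $f$ with $\sigma(\xi)=\xi^{p^f}$ for all roots of unity $\xi$ of order prime to $p$. For $N\trianglelefteq G$, $\theta\in\mathrm{Irr}(N)$, $g\in G$, $\sigma\in\mathcal G$: $\theta^{g\sigma}(n)=\sigma(\theta(gng^{-1}))$; $A_\theta$ the stabilizer in $A\le G\times\mathcal G$; $\theta^{\mathcal H}$ the $\mathcal H$-orbit; $G_{\theta^{\mathcal H}}=\{g:\theta^g\in\theta^{\mathcal H}\}$. $(G,N,\theta)_{\mathcal H}$ is an $\mathcal H$-triple if $N\trianglelefteq G$, $\theta\in\mathrm{Irr}(N)$, $G_{\theta^{\mathcal H}}=G$.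 Projective representation $\mathcal P$ with factor set $\alpha$: $\mathcal P(x)\mathcal P(y)=\alpha(x,y)\mathcal P(xy)$. For $G$-invariant $\theta$, $\mathcal P$ is associated with $\theta$ if $\mathcal P_N$ affords $\theta$ and $\mathcal P(ng)=\mathcal P(n)\mathcal P(g)$, $\mathcal P(gn)=\mathcal P(g)\mathcal P(n)$. $\mathcal Q\sim\mu\mathcal P$ means $\mathcal Q(x)=\mu(x)M^{-1}\mathcal P(x)M$ for fixed invertible $M$. For $\mathcal P$ associated with $\theta$ on $G_\theta$ with entries in $\mathbb Q^{\mathrm{ab}}$ and $\theta^{x\sigma}=\theta$: $\mathcal P^{x\sigma}(y)=\sigma(\mathcal P(xyx^{-1}))$, and $\mu_{x\sigma}$ is the unique function $G_\theta\to\mathbb C^\times$, constant on $N$-cosets, $\mu_{x\sigma}(1)=1$, with $\mathcal P^{x\sigma}\sim\mu_{x\sigma}\mathcal P$. For $\mathcal H$-triples with $H\le G$, the pair $(\mathcal P,\mathcal P')$ gives $(G,N,\theta)_{\mathcal H}\ge_c(H,M,\varphi)_{\mathcal H}$ if: (i) $G=NH$, $N\cap H=M$, $\mathbf C_G(N)\subseteq H$; (ii) $(H\times\mathcal H)_\theta=(H\times\mathcal H)_\varphi$; (iii) $\mathcal P$ is a projective representation of $G_\theta$ associated with $\theta$ and $\mathcal P'$ one of $H_\varphi$ associated with $\varphi$, entries in $\mathbb Q^{\mathrm{ab}}$, factor sets with root-of-unity values agreeing on $H_\theta\times H_\theta$, and $\mathcal P(c),\mathcal P'(c)$ the same scalar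 for all $c\in\mathbf C_G(N)$; (iv) $\mu_a=\mu'_a$ on $H_\theta$ for all $a\in(H\times\mathcal H)_\theta$ (with $\mu_a$, $\mu'_a$ computed from $\mathcal P$, $\mathcal P'$). *)

theory Defs
  imports "HOL-Algebra.Coset" "Jordan_Normal_Form.Matrix" "HOL-Computational_Algebra.Primes"
begin

definition roots_of_unity :: "complex set" where
  "roots_of_unity = {z. \<exists>n::nat. n > 0 \<and> z ^ n = 1}"

definition is_subfield_C :: "complex set \<Rightarrow> bool" where
  "is_subfield_C F \<longleftrightarrow> 0 \<in> F \<and> 1 \<in> F \<and>
     (\<forall>x\<in>F. \<forall>y\<in>F. x + y \<in> F \<and> x * y \<in> F) \<and>
     (\<forall>x\<in>F. - x \<in> F \<and> inverse x \<in> F)"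

definition Qab :: "complex set" where
  "Qab = \<Inter> {F. is_subfield_C F \<and> roots_of_unity \<subseteq> F}"

text \<open>Gal(Q^ab/Q): field automorphisms of Q^ab; each is represented by the
  unique function on C which is the identity outside Q^ab.\<close>
definition Gal_Qab :: "(complex \<Rightarrow> complex) set" where
  "Gal_Qab = {\<sigma>. bij_betw \<sigma> Qab Qab \<and>
      (\<forall>x\<in>Qab. \<forall>y\<in>Qab. \<sigma> (x + y) = \<sigma> x + \<sigma> y \<and> \<sigma> (x * y) = \<sigma> x * \<sigma> y) \<and>
      (\<forall>x. x \<notin> Qab \<longrightarrow> \<sigma> x = x)}"

definition roots_of_unity_p' :: "nat \<Rightarrow> complex set" where
  "roots_of_unity_p' p = {z. \<exists>m::nat. m > 0 \<and> coprime m p \<and> z ^ m = 1}"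

text \<open>The subgroup \<H>: there is an integer f with sigma(xi) = xi^(p^f) for all
  roots of unity xi of order prime to p.  For f = -k < 0 this means that
  sigma is inverse to xi |-> xi^(p^k), i.e. sigma(xi)^(p^k) = xi.\<close>
definition Hcal :: "nat \<Rightarrow> (complex \<Rightarrow> complex) set" where
  "Hcal p = {\<sigma> \<in> Gal_Qab. \<exists>f::nat.
      (\<forall>\<xi> \<in> roots_of_unity_p' p. \<sigma> \<xi> = \<xi> ^ (p ^ f)) \<or>
      (\<forall>\<xi> \<in> roots_of_unity_p' p. (\<sigma> \<xi>) ^ (p ^ f) = \<xi>)}"

definition mat_trace :: "complex mat \<Rightarrow> complex" where
  "mat_trace A = (\<Sum>i<dim_row A. A $$ (i, i))"

definition is_rep :: "('g, 'b) monoid_scheme \<Rightarrow> 'g set \<Rightarrow> nat \<Rightarrow> ('g \<Rightarrow> complex mat) \<Rightarrow> bool" where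
  "is_rep G N d \<rho> \<longleftrightarrow> (\<forall>n\<in>N. \<rho> n \<in> carrier_mat d d) \<and> \<rho> \<one>\<^bsub>G\<^esub> = 1\<^sub>m d \<and>
     (\<forall>x\<in>N. \<forall>y\<in>N. \<rho> (x \<otimes>\<^bsub>G\<^esub> y) = \<rho> x * \<rho> y)"

definition irreducible_rep :: "('g, 'b) monoid_scheme \<Rightarrow> 'g set \<Rightarrow> nat \<Rightarrow> ('g \<Rightarrow> complex mat) \<Rightarrow> bool" where
  "irreducible_rep G N d \<rho> \<longleftrightarrow> d > 0 \<and>
     \<not> (\<exists>W. W \<subseteq> carrier_vec d \<and> 0\<^sub>v d \<in> W \<and>
            (\<forall>v\<in>W. \<forall>w\<in>W. v + w \<in> W) \<and> (\<forall>c::complex. \<forall>v\<in>W. c \<cdot>\<^sub>v v \<in> W) \<and>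
            W \<noteq> {0\<^sub>v d} \<and> W \<noteq> carrier_vec d \<and>
            (\<forall>n\<in>N. \<forall>w\<in>W. \<rho> n *\<^sub>v w \<in> W))"

definition irr_char :: "('g, 'b) monoid_scheme \<Rightarrow> 'g set \<Rightarrow> ('g \<Rightarrow> complex) \<Rightarrow> bool" where
  "irr_char G N \<theta> \<longleftrightarrow> (\<exists>d \<rho>. is_rep G N d \<rho> \<and> irreducible_rep G N d \<rho> \<and>
       (\<forall>n\<in>N. \<theta> n = mat_trace (\<rho> n)))"

text \<open>Stabilizer A_theta for A a subset of G x \<G> (here A = K x S).  theta^{g sigma}(n) = sigma(theta(g n g^-1)).\<close>
definition stab_pairs :: "('g, 'b) monoid_scheme \<Rightarrow> 'g set \<Rightarrow> (complex \<Rightarrow> complex) set \<Rightarrow> 'g set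
     \<Rightarrow> ('g \<Rightarrow> complex) \<Rightarrow> ('g \<times> (complex \<Rightarrow> complex)) set" where
  "stab_pairs G K S N \<theta> = {(g, \<sigma>). g \<in> K \<and> \<sigma> \<in> S \<and>
      (\<forall>n\<in>N. \<sigma> (\<theta> (g \<otimes>\<^bsub>G\<^esub> n \<otimes>\<^bsub>G\<^esub> inv\<^bsub>G\<^esub> g)) = \<theta> n)}"

definition stab :: "('g, 'b) monoid_scheme \<Rightarrow> 'g set \<Rightarrow> 'g set \<Rightarrow> ('g \<Rightarrow> complex) \<Rightarrow> 'g set" where
  "stab G K N \<theta> = {g \<in> K. \<forall>n\<in>N. \<theta> (g \<otimes>\<^bsub>G\<^esub> n \<otimes>\<^bsub>G\<^esub> inv\<^bsub>G\<^esub> g) = \<theta> n}"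

text \<open>(K,N,theta)_\<H> is an \<H>-triple (all inside the ambient group G):
  N normal in K, theta in Irr(N), K_{theta^\<H>} = K.\<close>
definition H_triple :: "('g, 'b) monoid_scheme \<Rightarrow> nat \<Rightarrow> 'g set \<Rightarrow> 'g set \<Rightarrow> ('g \<Rightarrow> complex) \<Rightarrow> bool" where
  "H_triple G p K N \<theta> \<longleftrightarrow> subgroup K G \<and> subgroup N G \<and> N \<subseteq> K \<and>
     (\<forall>k\<in>K. \<forall>n\<in>N. k \<otimes>\<^bsub>G\<^esub> n \<otimes>\<^bsub>G\<^esub> inv\<^bsub>G\<^esub> k \<in> N) \<and>
     irr_char G N \<theta> \<and>
     (\<forall>g\<in>K. \<exists>\<sigma>\<in>Hcal p. \<forall>n\<in>N. \<theta> (g \<otimes>\<^bsub>G\<^esub> n \<otimes>\<^bsub>G\<^esub> inv\<^bsub>G\<^esub> g) = \<sigma> (\<theta> n))"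

definition centralizer_of :: "('g, 'b) monoid_scheme \<Rightarrow> 'g set \<Rightarrow> 'g set" where
  "centralizer_of G N = {g \<in> carrier G. \<forall>n\<in>N. g \<otimes>\<^bsub>G\<^esub> n = n \<otimes>\<^bsub>G\<^esub> g}"

definition proj_rep :: "('g, 'b) monoid_scheme \<Rightarrow> 'g set \<Rightarrow> nat \<Rightarrow> ('g \<Rightarrow> complex mat)
     \<Rightarrow> ('g \<Rightarrow> 'g \<Rightarrow> complex) \<Rightarrow> bool" where
  "proj_rep G S d P \<alpha> \<longleftrightarrow> (\<forall>x\<in>S. P x \<in> carrier_mat d d \<and> invertible_mat (P x)) \<and>
     (\<forall>x\<in>S. \<forall>y\<in>S. \<alpha> x y \<noteq> 0 \<and> P x * P y = \<alpha> x y \<cdot>\<^sub>m P (x \<otimes>\<^bsub>G\<^esub> y))"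

definition assoc_with :: "('g, 'b) monoid_scheme \<Rightarrow> 'g set \<Rightarrow> 'g set \<Rightarrow> ('g \<Rightarrow> complex)
     \<Rightarrow> nat \<Rightarrow> ('g \<Rightarrow> complex mat) \<Rightarrow> bool" where
  "assoc_with G S N \<theta> d P \<longleftrightarrow> is_rep G N d P \<and> (\<forall>n\<in>N. mat_trace (P n) = \<theta> n) \<and>
     (\<forall>n\<in>N. \<forall>g\<in>S. P (n \<otimes>\<^bsub>G\<^esub> g) = P n * P g \<and> P (g \<otimes>\<^bsub>G\<^esub> n) = P g * P n)"

definition entries_in_Qab :: "'g set \<Rightarrow> ('g \<Rightarrow> complex mat) \<Rightarrow> bool" where
  "entries_in_Qab S P \<longleftrightarrow>
     (\<forall>x\<in>S. \<forall>i<dim_row (P x). \<forall>j<dim_col (P x). P x $$ (i, j) \<in> Qab)"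

text \<open>mu satisfies the defining property of mu_{x sigma} for P on S (over N):
  mu : S -> C^x, constant on N-cosets, mu(1) = 1, and P^{x sigma} ~ mu P, where
  P^{x sigma}(y) = sigma(P(x y x^-1)) entrywise.\<close>
definition is_mu :: "('g, 'b) monoid_scheme \<Rightarrow> 'g set \<Rightarrow> 'g set \<Rightarrow> ('g \<Rightarrow> complex mat)
     \<Rightarrow> 'g \<Rightarrow> (complex \<Rightarrow> complex) \<Rightarrow> ('g \<Rightarrow> complex) \<Rightarrow> bool" where
  "is_mu G S N P x \<sigma> \<mu> \<longleftrightarrow>
     (let d = dim_row (P \<one>\<^bsub>G\<^esub>) in
       (\<forall>y\<in>S. \<mu> y \<noteq> 0) \<and> \<mu> \<one>\<^bsub>G\<^esub> = 1 \<and>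
       (\<forall>y\<in>S. \<forall>n\<in>N. \<mu> (n \<otimes>\<^bsub>G\<^esub> y) = \<mu> y) \<and>
       (\<exists>A Ai. A \<in> carrier_mat d d \<and> Ai \<in> carrier_mat d d \<and> A * Ai = 1\<^sub>m d \<and> Ai * A = 1\<^sub>m d \<and>
          (\<forall>y\<in>S. map_mat \<sigma> (P (x \<otimes>\<^bsub>G\<^esub> y \<otimes>\<^bsub>G\<^esub> inv\<^bsub>G\<^esub> x)) = \<mu> y \<cdot>\<^sub>m (Ai * P y * A))))"

definition ge_c :: "('g, 'b) monoid_scheme \<Rightarrow> nat \<Rightarrow> 'g set \<Rightarrow> ('g \<Rightarrow> complex)
     \<Rightarrow> 'g set \<Rightarrow> 'g set \<Rightarrow> ('g \<Rightarrow> complex) \<Rightarrow> ('g \<Rightarrow> complex mat) \<Rightarrow> ('g \<Rightarrow> complex mat) \<Rightarrow> bool" where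
  "ge_c G p N \<theta> H M \<phi> P P' \<longleftrightarrow>
     H_triple G p (carrier G) N \<theta> \<and> H_triple G p H M \<phi> \<and> subgroup H G \<and>
     \<comment> \<open>(i)\<close>
     carrier G = N <#>\<^bsub>G\<^esub> H \<and> N \<inter> H = M \<and> centralizer_of G N \<subseteq> H \<and>
     \<comment> \<open>(ii)\<close>
     stab_pairs G H (Hcal p) N \<theta> = stab_pairs G H (Hcal p) M \<phi> \<and>
     \<comment> \<open>(iii)\<close>
     (\<exists>d d' \<alpha> \<alpha>'.
        proj_rep G (stab G (carrier G) N \<theta>) d P \<alpha> \<and> assoc_with G (stab G (carrier G) N \<theta>) N \<theta> d P \<and>
        proj_rep G (stab G H M \<phi>) d' P' \<alpha>' \<and> assoc_with G (stab G H M \<phi>) M \<phi> d' P' \<and>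
        entries_in_Qab (stab G (carrier G) N \<theta>) P \<and> entries_in_Qab (stab G H M \<phi>) P' \<and>
        (\<forall>x\<in>stab G (carrier G) N \<theta>. \<forall>y\<in>stab G (carrier G) N \<theta>. \<alpha> x y \<in> roots_of_unity) \<and>
        (\<forall>x\<in>stab G H M \<phi>. \<forall>y\<in>stab G H M \<phi>. \<alpha>' x y \<in> roots_of_unity) \<and>
        (\<forall>x\<in>stab G H N \<theta>. \<forall>y\<in>stab G H N \<theta>. \<alpha> x y = \<alpha>' x y) \<and>
        (\<forall>c\<in>centralizer_of G N. \<exists>s. P c = s \<cdot>\<^sub>m 1\<^sub>m d \<and> P' c = s \<cdot>\<^sub>m 1\<^sub>m d')) \<and>
     \<comment> \<open>(iv)\<close>
     (\<forall>x \<sigma>. (x, \<sigma>) \<in> stab_pairs G H (Hcal p) N \<theta> \<longrightarrow>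
        (\<exists>\<mu> \<mu>'. is_mu G (stab G (carrier G) N \<theta>) N P x \<sigma> \<mu> \<and> is_mu G (stab G H M \<phi>) M P' x \<sigma> \<mu>') \<and>
        (\<forall>\<mu> \<mu>'. is_mu G (stab G (carrier G) N \<theta>) N P x \<sigma> \<mu> \<longrightarrow> is_mu G (stab G H M \<phi>) M P' x \<sigma> \<mu>' \<longrightarrow>
           (\<forall>y\<in>stab G H N \<theta>. \<mu> y = \<mu>' y)))"

end

theory Submission
  imports Defs
begin

lemma smult_mult_smult: "A \<in> carrier_mat nr n \<Longrightarrow> B \<in> carrier_mat n nc \<Longrightarrow> (a \<cdot>\<^sub>m A) * (b \<cdot>\<^sub>m (B::'a::comm_ring mat)) = (a*b) \<cdot>\<^sub>m (A * B)"
proof -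
  assume A: "A \<in> carrier_mat nr n" and B: "B \<in> carrier_mat n nc"
  have "(a \<cdot>\<^sub>m A) * (b \<cdot>\<^sub>m B) = b \<cdot>\<^sub>m ((a \<cdot>\<^sub>m A) * B)" using A B by (intro mult_smult_distrib) auto
  also have "\<dots> = b \<cdot>\<^sub>m (a \<cdot>\<^sub>m (A * B))" using A B by (simp add: mult_smult_assoc_mat)
  also have "\<dots> = (a*b) \<cdot>\<^sub>m (A * B)" by (rule eq_matI) (auto simp: ac_simps)
  finally show ?thesis .
qed
lemma smult_smult_mat: "a \<cdot>\<^sub>m (b \<cdot>\<^sub>m (A::'a::comm_ring mat)) = (a*b) \<cdot>\<^sub>m A"
  by (rule eq_matI) (auto simp: ac_simps)
lemma smult_one_mat: "(1::'a::ring_1) \<cdot>\<^sub>m A = A"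
  by (rule eq_matI) auto
lemma invertible_smult: assumes "invertible_mat (A::complex mat)" "k \<noteq> 0"
  shows "invertible_mat (k \<cdot>\<^sub>m A)"
proof -
  obtain B where B: "inverts_mat A B" "inverts_mat B A" and sq: "square_mat A" using assms unfolding invertible_mat_def by auto
  define d where "d = dim_row A"
  have A: "A \<in> carrier_mat d d" using sq d_def by auto
  have "dim_col B = d" using B(1) unfolding inverts_mat_def d_def
    by (metis index_mult_mat(3) index_one_mat(3))
  moreover have "dim_row B = d" using B(2) A unfolding inverts_mat_def 
    by (metis carrier_matD(2) index_mult_mat(3) index_one_mat(3))
  ultimately have Bc: "B \<in> carrier_mat d d" by auto
  have "inverts_mat (k \<cdot>\<^sub>m A) (inverse k \<cdot>\<^sub>m B)" using B(1) assms(2) A Bc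
    unfolding inverts_mat_def by (simp add: smult_mult_smult[OF A Bc] smult_one_mat)
  moreover have "inverts_mat (inverse k \<cdot>\<^sub>m B) (k \<cdot>\<^sub>m A)" using B(2) assms(2)
    unfolding inverts_mat_def by (simp add: smult_mult_smult[OF Bc A] smult_one_mat)
  ultimately show ?thesis using sq unfolding invertible_mat_def square_mat.simps by auto
qed

lemma roots_Qab: "roots_of_unity \<subseteq> Qab" unfolding Qab_def by auto
lemma one_root: "1 \<in> roots_of_unity" unfolding roots_of_unity_def by (rule CollectI, rule exI[of _ 1]) auto
lemma zero_Qab: "0 \<in> Qab" unfolding Qab_def is_subfield_C_def by auto
lemma one_Qab: "1 \<in> Qab" using roots_Qab one_root by auto
lemma mult_Qab: "x \<in> Qab \<Longrightarrow> y \<in> Qab \<Longrightarrow> x * y \<in> Qab" unfolding Qab_def is_subfield_C_def by auto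
lemma root_nz: "z \<in> roots_of_unity \<Longrightarrow> z \<noteq> 0" unfolding roots_of_unity_def by (auto simp: zero_power)
lemma root_mult: assumes "z \<in> roots_of_unity" "w \<in> roots_of_unity" shows "z * w \<in> roots_of_unity"
proof -
  obtain n m :: nat where "n > 0" "z^n = 1" "m>0" "w^m = 1" using assms unfolding roots_of_unity_def by auto
  have "(z*w)^(n*m) = (z^n)^m * (w^m)^n" by (simp add: power_mult_distrib power_mult[symmetric] mult.commute)
  hence "(z*w)^(n*m) = 1" using \<open>z^n = 1\<close> \<open>w^m = 1\<close> by simp
  moreover have "n*m > 0" using \<open>n>0\<close> \<open>m>0\<close> by simp
  ultimately show ?thesis unfolding roots_of_unity_def by blast
qed
lemma root_inv: assumes "z \<in> roots_of_unity" shows "inverse z \<in> roots_of_unity"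
proof -
  obtain n :: nat where "n > 0" "z^n = 1" using assms unfolding roots_of_unity_def by auto
  hence "(inverse z)^n = 1" by (simp add: power_inverse)
  thus ?thesis using \<open>n>0\<close> unfolding roots_of_unity_def by auto
qed
lemma gal_inj: assumes "\<sigma> \<in> Gal_Qab" shows "inj \<sigma>"
proof (rule injI)
  fix a b assume e: "\<sigma> a = \<sigma> b"
  have bij: "bij_betw \<sigma> Qab Qab" and out: "\<And>x. x \<notin> Qab \<Longrightarrow> \<sigma> x = x" using assms unfolding Gal_Qab_def by auto
  show "a = b"
  proof (cases "a \<in> Qab"; cases "b \<in> Qab")
    assume "a \<in> Qab" "b \<in> Qab" thus ?thesis using bij_betw_imp_inj_on[OF bij] e by (simp add: inj_on_def)
  next
    assume "a \<in> Qab" "b \<notin> Qab" thus ?thesis using bij_betwE[OF bij] e out by force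
  next
    assume "a \<notin> Qab" "b \<in> Qab" thus ?thesis using bij_betwE[OF bij] e out by force
  next
    assume "a \<notin> Qab" "b \<notin> Qab" thus ?thesis using e out by auto
  qed
qed
lemma gal_mult: "\<sigma> \<in> Gal_Qab \<Longrightarrow> x \<in> Qab \<Longrightarrow> y \<in> Qab \<Longrightarrow> \<sigma> (x*y) = \<sigma> x * \<sigma> y"
  unfolding Gal_Qab_def by auto
lemma gal_zero: assumes "\<sigma> \<in> Gal_Qab" shows "\<sigma> 0 = 0"
proof -
  have "\<sigma> (0+0) = \<sigma> 0 + \<sigma> 0" using assms zero_Qab unfolding Gal_Qab_def by blast
  thus ?thesis by simp
qed
lemma gal_nz: "\<sigma> \<in> Gal_Qab \<Longrightarrow> x \<noteq> 0 \<Longrightarrow> \<sigma> x \<noteq> 0"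
  using gal_inj gal_zero by (metis injD)
lemma gal_one: assumes "\<sigma> \<in> Gal_Qab" shows "\<sigma> 1 = 1"
proof -
  have "\<sigma> 1 = \<sigma> 1 * \<sigma> 1" using gal_mult[OF assms one_Qab one_Qab] by simp
  moreover have "\<sigma> 1 \<noteq> 0" using gal_nz[OF assms] by simp
  ultimately show ?thesis by (metis mult_cancel_left2)
qed
lemma id_Hcal: "id \<in> Hcal p"
proof -
  have "id \<in> Gal_Qab" unfolding Gal_Qab_def by (simp add: bij_betw_id)
  thus ?thesis unfolding Hcal_def by (intro CollectI conjI exI[of _ 0]) simp_all
qed

lemma (in group) lc1: "x \<in> carrier G \<Longrightarrow> y \<in> carrier G \<Longrightarrow> inv x \<otimes> (x \<otimes> y) = y"
  by (simp add: m_assoc[symmetric])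
lemma (in group) lc2: "x \<in> carrier G \<Longrightarrow> y \<in> carrier G \<Longrightarrow> x \<otimes> (inv x \<otimes> y) = y"
  by (simp add: m_assoc[symmetric])
lemma (in group) conj_prod: "x \<in> carrier G \<Longrightarrow> n \<in> carrier G \<Longrightarrow> y \<in> carrier G \<Longrightarrow>
  x \<otimes> (n \<otimes> y) \<otimes> inv x = (x \<otimes> n \<otimes> inv x) \<otimes> (x \<otimes> y \<otimes> inv x)"
  by (simp add: m_assoc lc1)
lemma (in group) swap_conj: "g \<in> carrier G \<Longrightarrow> n \<in> carrier G \<Longrightarrow> g \<otimes> n = (g \<otimes> n \<otimes> inv g) \<otimes> g"
  by (simp add: m_assoc)
lemma (in group) e1: "x \<in> carrier G \<Longrightarrow> y \<in> carrier G \<Longrightarrow> n \<in> carrier G \<Longrightarrow> x \<otimes> y \<otimes> inv x \<otimes> n \<otimes> inv (x \<otimes> y \<otimes> inv x) = x \<otimes> (y \<otimes> (inv x \<otimes> n \<otimes> x) \<otimes> inv y) \<otimes> inv x"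
  by (simp add: m_assoc inv_mult_group lc1 lc2)
lemma (in group) e2: "x \<in> carrier G \<Longrightarrow> y \<in> carrier G \<Longrightarrow> n \<in> carrier G \<Longrightarrow> x \<otimes> y \<otimes> n \<otimes> inv (x \<otimes> y) = x \<otimes> (y \<otimes> n \<otimes> inv y) \<otimes> inv x"
  by (simp add: m_assoc inv_mult_group lc1 lc2)
lemma (in group) e3: "x \<in> carrier G \<Longrightarrow> n \<in> carrier G \<Longrightarrow> x \<otimes> (inv x \<otimes> n \<otimes> x) \<otimes> inv x = n"
  by (simp add: m_assoc inv_mult_group lc1 lc2)


lemma (in group) stab_mult:
  assumes K: "subgroup K G" and N: "subgroup N G"
    and nor: "\<forall>k\<in>K. \<forall>n\<in>N. k \<otimes> n \<otimes> inv k \<in> N"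
    and x: "x \<in> stab G K N \<theta>" and y: "y \<in> stab G K N \<theta>"
  shows "x \<otimes> y \<in> stab G K N \<theta>"
proof -
  have xK: "x \<in> K" and yK: "y \<in> K" and xs: "\<forall>n\<in>N. \<theta> (x \<otimes> n \<otimes> inv x) = \<theta> n"
    and ys: "\<forall>n\<in>N. \<theta> (y \<otimes> n \<otimes> inv y) = \<theta> n" using x y unfolding stab_def by auto
  have xc: "x \<in> carrier G" and yc: "y \<in> carrier G" using xK yK subgroup.subset[OF K] by auto
  have "\<theta> (x \<otimes> y \<otimes> n \<otimes> inv (x \<otimes> y)) = \<theta> n" if n: "n \<in> N" for n
  proof -
    have nc: "n \<in> carrier G" using n subgroup.subset[OF N] by auto
    have m: "y \<otimes> n \<otimes> inv y \<in> N" using nor yK n by auto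
    have "x \<otimes> y \<otimes> n \<otimes> inv (x \<otimes> y) = x \<otimes> (y \<otimes> n \<otimes> inv y) \<otimes> inv x"
      using e2[OF xc yc nc] .
    moreover have "\<theta> (x \<otimes> (y \<otimes> n \<otimes> inv y) \<otimes> inv x) = \<theta> (y \<otimes> n \<otimes> inv y)" using xs m by blast
    ultimately have "\<theta> (x \<otimes> y \<otimes> n \<otimes> inv (x \<otimes> y)) = \<theta> (y \<otimes> n \<otimes> inv y)" by simp
    also have "\<dots> = \<theta> n" using ys n by blast
    finally show ?thesis .
  qed
  moreover have "x \<otimes> y \<in> K" using subgroup.m_closed[OF K xK yK] .
  ultimately show ?thesis unfolding stab_def by blast
qed

lemma (in group) stab_conj:
  assumes K: "subgroup K G" and N: "subgroup N G"
    and nor: "\<forall>k\<in>K. \<forall>n\<in>N. k \<otimes> n \<otimes> inv k \<in> N"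
    and xK: "x \<in> K" and inj: "inj \<sigma>" and xs: "\<forall>n\<in>N. \<sigma> (\<theta> (x \<otimes> n \<otimes> inv x)) = \<theta> n"
    and y: "y \<in> stab G K N \<theta>"
  shows "x \<otimes> y \<otimes> inv x \<in> stab G K N \<theta>"
proof -
  have yK: "y \<in> K" and ys: "\<forall>n\<in>N. \<theta> (y \<otimes> n \<otimes> inv y) = \<theta> n" using y unfolding stab_def by auto
  have xc: "x \<in> carrier G" and yc: "y \<in> carrier G" using xK yK subgroup.subset[OF K] by auto
  have ixK: "inv x \<in> K" using subgroup.m_inv_closed[OF K xK] .
  have "\<theta> (x \<otimes> y \<otimes> inv x \<otimes> n \<otimes> inv (x \<otimes> y \<otimes> inv x)) = \<theta> n" if n: "n \<in> N" for n
  proof -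
    have nc: "n \<in> carrier G" using n subgroup.subset[OF N] by auto
    define n' where "n' = inv x \<otimes> n \<otimes> x"
    have n': "n' \<in> N" using nor[rule_format, OF ixK n] xc unfolding n'_def by simp
    have n'c: "n' \<in> carrier G" using n' subgroup.subset[OF N] by auto
    have m: "y \<otimes> n' \<otimes> inv y \<in> N" using nor yK n' by auto
    have e1: "x \<otimes> y \<otimes> inv x \<otimes> n \<otimes> inv (x \<otimes> y \<otimes> inv x) = x \<otimes> (y \<otimes> n' \<otimes> inv y) \<otimes> inv x"
      using e1[OF xc yc nc] unfolding n'_def .
    have e2: "x \<otimes> n' \<otimes> inv x = n" using e3[OF xc nc] unfolding n'_def .
    have "\<sigma> (\<theta> (x \<otimes> y \<otimes> inv x \<otimes> n \<otimes> inv (x \<otimes> y \<otimes> inv x))) = \<theta> (y \<otimes> n' \<otimes> inv y)"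
      unfolding e1 using xs m by blast
    also have "\<dots> = \<theta> n'" using ys n' by blast
    also have "\<dots> = \<sigma> (\<theta> n)" using xs[rule_format, OF n'] e2 by simp
    finally show ?thesis using inj by (simp add: inj_eq)
  qed
  moreover have "x \<otimes> y \<otimes> inv x \<in> K" using subgroup.m_closed[OF K subgroup.m_closed[OF K xK yK] ixK] .
  ultimately show ?thesis unfolding stab_def by blast
qed


lemma map_smult_gal: assumes "\<sigma> \<in> Gal_Qab" "a \<in> Qab"
  "\<forall>i<dim_row M. \<forall>j<dim_col M. M $$ (i, j) \<in> Qab"
  shows "map_mat \<sigma> (a \<cdot>\<^sub>m M) = \<sigma> a \<cdot>\<^sub>m map_mat \<sigma> M"
  by (rule eq_matI) (use assms in \<open>auto simp: gal_mult\<close>)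

lemma proj_scale:
  assumes "proj_rep G S d P \<alpha>" "\<forall>x\<in>S. c x \<noteq> 0" "\<forall>x\<in>S. \<forall>y\<in>S. x \<otimes>\<^bsub>G\<^esub> y \<in> S"
  shows "proj_rep G S d (\<lambda>x. c x \<cdot>\<^sub>m P x) (\<lambda>x y. c x * c y / c (x \<otimes>\<^bsub>G\<^esub> y) * \<alpha> x y)"
  unfolding proj_rep_def
proof (intro conjI ballI)
  fix x assume x: "x \<in> S"
  show "c x \<cdot>\<^sub>m P x \<in> carrier_mat d d" using assms(1) x unfolding proj_rep_def by auto
  show "invertible_mat (c x \<cdot>\<^sub>m P x)" using assms(1,2) x unfolding proj_rep_def by (auto intro: invertible_smult)
next
  fix x y assume x: "x \<in> S" and y: "y \<in> S"
  have xy: "x \<otimes>\<^bsub>G\<^esub> y \<in> S" using assms(3) x y by auto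
  have a: "\<alpha> x y \<noteq> 0" and e: "P x * P y = \<alpha> x y \<cdot>\<^sub>m P (x \<otimes>\<^bsub>G\<^esub> y)"
    and Px: "P x \<in> carrier_mat d d" and Py: "P y \<in> carrier_mat d d"
    using assms(1) x y unfolding proj_rep_def by auto
  show "c x * c y / c (x \<otimes>\<^bsub>G\<^esub> y) * \<alpha> x y \<noteq> 0" using a assms(2) x y xy by auto
  have "(c x \<cdot>\<^sub>m P x) * (c y \<cdot>\<^sub>m P y) = (c x * c y) \<cdot>\<^sub>m (\<alpha> x y \<cdot>\<^sub>m P (x \<otimes>\<^bsub>G\<^esub> y))"
    using smult_mult_smult[OF Px Py] e by simp
  also have "\<dots> = (c x * c y / c (x \<otimes>\<^bsub>G\<^esub> y) * \<alpha> x y) \<cdot>\<^sub>m (c (x \<otimes>\<^bsub>G\<^esub> y) \<cdot>\<^sub>m P (x \<otimes>\<^bsub>G\<^esub> y))"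
    using assms(2) xy by (simp add: smult_smult_mat)
  finally show "(c x \<cdot>\<^sub>m P x) * (c y \<cdot>\<^sub>m P y) = (c x * c y / c (x \<otimes>\<^bsub>G\<^esub> y) * \<alpha> x y) \<cdot>\<^sub>m (c (x \<otimes>\<^bsub>G\<^esub> y) \<cdot>\<^sub>m P (x \<otimes>\<^bsub>G\<^esub> y))" .
qed

lemma assoc_scale:
  assumes "assoc_with G S N \<theta> d P" "\<forall>g\<in>S. P g \<in> carrier_mat d d" "\<forall>n\<in>N. c n = 1"
    "\<forall>n\<in>N. \<forall>g\<in>S. c (n \<otimes>\<^bsub>G\<^esub> g) = c g \<and> c (g \<otimes>\<^bsub>G\<^esub> n) = c g" "c \<one>\<^bsub>G\<^esub> = 1"
    "\<forall>x\<in>N. \<forall>y\<in>N. x \<otimes>\<^bsub>G\<^esub> y \<in> N"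
  shows "assoc_with G S N \<theta> d (\<lambda>x. c x \<cdot>\<^sub>m P x)"
proof -
  have rep: "is_rep G N d P" and tr: "\<forall>n\<in>N. mat_trace (P n) = \<theta> n"
    and sp: "\<forall>n\<in>N. \<forall>g\<in>S. P (n \<otimes>\<^bsub>G\<^esub> g) = P n * P g \<and> P (g \<otimes>\<^bsub>G\<^esub> n) = P g * P n"
    using assms(1) unfolding assoc_with_def by auto
  have PN: "\<forall>n\<in>N. P n \<in> carrier_mat d d" using rep unfolding is_rep_def by auto
  have "is_rep G N d (\<lambda>x. c x \<cdot>\<^sub>m P x)" unfolding is_rep_def
  proof (intro conjI ballI)
    fix n assume "n \<in> N" thus "c n \<cdot>\<^sub>m P n \<in> carrier_mat d d" using PN by auto
  next
    show "c \<one>\<^bsub>G\<^esub> \<cdot>\<^sub>m P \<one>\<^bsub>G\<^esub> = 1\<^sub>m d" using assms(5) rep unfolding is_rep_def by (simp add: smult_one_mat)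
  next
    fix x y assume x: "x \<in> N" and y: "y \<in> N"
    have "c (x \<otimes>\<^bsub>G\<^esub> y) = 1" using assms(3,6) x y by blast
    thus "c (x \<otimes>\<^bsub>G\<^esub> y) \<cdot>\<^sub>m P (x \<otimes>\<^bsub>G\<^esub> y) = c x \<cdot>\<^sub>m P x * (c y \<cdot>\<^sub>m P y)"
      using assms(3) x y rep unfolding is_rep_def by (simp add: smult_one_mat)
  qed
  moreover have "\<forall>n\<in>N. mat_trace (c n \<cdot>\<^sub>m P n) = \<theta> n" using tr assms(3) by (simp add: smult_one_mat)
  moreover have "\<forall>n\<in>N. \<forall>g\<in>S. c (n \<otimes>\<^bsub>G\<^esub> g) \<cdot>\<^sub>m P (n \<otimes>\<^bsub>G\<^esub> g) = (c n \<cdot>\<^sub>m P n) * (c g \<cdot>\<^sub>m P g) \<and>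
      c (g \<otimes>\<^bsub>G\<^esub> n) \<cdot>\<^sub>m P (g \<otimes>\<^bsub>G\<^esub> n) = (c g \<cdot>\<^sub>m P g) * (c n \<cdot>\<^sub>m P n)"
  proof (intro ballI)
    fix n g assume n: "n \<in> N" and g: "g \<in> S"
    have Pn: "P n \<in> carrier_mat d d" using PN n by auto
    have Pg: "P g \<in> carrier_mat d d" using assms(2) g by auto
    show "c (n \<otimes>\<^bsub>G\<^esub> g) \<cdot>\<^sub>m P (n \<otimes>\<^bsub>G\<^esub> g) = (c n \<cdot>\<^sub>m P n) * (c g \<cdot>\<^sub>m P g) \<and>
      c (g \<otimes>\<^bsub>G\<^esub> n) \<cdot>\<^sub>m P (g \<otimes>\<^bsub>G\<^esub> n) = (c g \<cdot>\<^sub>m P g) * (c n \<cdot>\<^sub>m P n)"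
      using sp n g assms(3,4) smult_mult_smult[OF Pn Pg] smult_mult_smult[OF Pg Pn] by simp
  qed
  ultimately show ?thesis unfolding assoc_with_def by blast
qed

lemma entries_scale:
  assumes "entries_in_Qab S P" "\<forall>x\<in>S. c x \<in> Qab"
  shows "entries_in_Qab S (\<lambda>x. c x \<cdot>\<^sub>m P x)"
  using assms unfolding entries_in_Qab_def by (auto intro: mult_Qab)



lemma mu_scale:
  fixes G (structure)
  assumes sg: "\<sigma> \<in> Gal_Qab" and one: "\<one> \<in> S"
    and cj: "\<forall>y\<in>S. x \<otimes> y \<otimes> inv x \<in> S" and cj1: "x \<otimes> \<one> \<otimes> inv x = \<one>"
    and Q: "\<forall>y\<in>S. Q y = c y \<cdot>\<^sub>m P y"
    and cr: "\<forall>y\<in>S. c y \<in> roots_of_unity"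
    and cN: "\<forall>y\<in>S. \<forall>n\<in>N. c (n \<otimes> y) = c y"
    and cN2: "\<forall>y\<in>S. \<forall>n\<in>N. c (x \<otimes> (n \<otimes> y) \<otimes> inv x) = c (x \<otimes> y \<otimes> inv x)"
    and c1: "c \<one> = 1"
    and ent: "entries_in_Qab S P"
    and car: "\<forall>y\<in>S. P y \<in> carrier_mat (dim_row (P \<one>)) (dim_row (P \<one>))"
    and mu: "is_mu G S N P x \<sigma> \<mu>"
  shows "is_mu G S N Q x \<sigma> (\<lambda>y. \<sigma> (c (x \<otimes> y \<otimes> inv x)) / c y * \<mu> y)"
proof -
  define d where "d = dim_row (P \<one>)"
  have Q1: "Q \<one> = P \<one>" using Q one c1 by (simp add: smult_one_mat)
  have dQ: "dim_row (Q \<one>) = d" using Q1 d_def by simp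
  have mnz: "\<forall>y\<in>S. \<mu> y \<noteq> 0" and m1: "\<mu> \<one> = 1" and mN: "\<forall>y\<in>S. \<forall>n\<in>N. \<mu> (n \<otimes> y) = \<mu> y"
    using mu unfolding is_mu_def Let_def by auto
  obtain A Ai where A: "A \<in> carrier_mat d d" "Ai \<in> carrier_mat d d" "A * Ai = 1\<^sub>m d" "Ai * A = 1\<^sub>m d"
    and eq: "\<forall>y\<in>S. map_mat \<sigma> (P (x \<otimes> y \<otimes> inv x)) = \<mu> y \<cdot>\<^sub>m (Ai * P y * A)"
    using mu unfolding is_mu_def Let_def d_def by auto
  have cnz: "\<forall>y\<in>S. c y \<noteq> 0" using cr root_nz by auto
  have cQ: "\<forall>y\<in>S. c y \<in> Qab" using cr roots_Qab by auto
  have "\<forall>y\<in>S. \<sigma> (c (x \<otimes> y \<otimes> inv x)) / c y * \<mu> y \<noteq> 0"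
    using cnz mnz cj gal_nz[OF sg] by auto
  moreover have "\<sigma> (c (x \<otimes> \<one> \<otimes> inv x)) / c \<one> * \<mu> \<one> = 1" using cj1 c1 m1 gal_one[OF sg] by simp
  moreover have "\<forall>y\<in>S. \<forall>n\<in>N. \<sigma> (c (x \<otimes> (n \<otimes> y) \<otimes> inv x)) / c (n \<otimes> y) * \<mu> (n \<otimes> y) =
       \<sigma> (c (x \<otimes> y \<otimes> inv x)) / c y * \<mu> y"
    using cN cN2 mN by simp
  moreover have "\<forall>y\<in>S. map_mat \<sigma> (Q (x \<otimes> y \<otimes> inv x)) =
       (\<sigma> (c (x \<otimes> y \<otimes> inv x)) / c y * \<mu> y) \<cdot>\<^sub>m (Ai * Q y * A)"
  proof
    fix y assume y: "y \<in> S"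
    define z where "z = x \<otimes> y \<otimes> inv x"
    have z: "z \<in> S" using cj y z_def by auto
    have Py: "P y \<in> carrier_mat d d" using car y d_def by auto
    have "map_mat \<sigma> (Q z) = map_mat \<sigma> (c z \<cdot>\<^sub>m P z)" using Q z by simp
    also have "\<dots> = \<sigma> (c z) \<cdot>\<^sub>m map_mat \<sigma> (P z)"
      using map_smult_gal[OF sg] cQ z ent unfolding entries_in_Qab_def by auto
    also have "\<dots> = \<sigma> (c z) \<cdot>\<^sub>m (\<mu> y \<cdot>\<^sub>m (Ai * P y * A))" using eq y z_def by simp
    also have "\<dots> = (\<sigma> (c z) / c y * \<mu> y) \<cdot>\<^sub>m (c y \<cdot>\<^sub>m (Ai * P y * A))"
      using cnz y by (simp add: smult_smult_mat)
    also have "c y \<cdot>\<^sub>m (Ai * P y * A) = Ai * Q y * A"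
    proof -
      have "Ai * Q y = c y \<cdot>\<^sub>m (Ai * P y)" using Q y mult_smult_distrib[OF A(2) Py] by simp
      moreover have "(c y \<cdot>\<^sub>m (Ai * P y)) * A = c y \<cdot>\<^sub>m (Ai * P y * A)"
        using mult_smult_assoc_mat[OF mult_carrier_mat[OF A(2) Py] A(1)] by simp
      ultimately show ?thesis by simp
    qed
    finally show "map_mat \<sigma> (Q (x \<otimes> y \<otimes> inv x)) =
       (\<sigma> (c (x \<otimes> y \<otimes> inv x)) / c y * \<mu> y) \<cdot>\<^sub>m (Ai * Q y * A)" unfolding z_def .
  qed
  ultimately show ?thesis unfolding is_mu_def Let_def dQ using A by blast
qed
lemma mu_pack:
  fixes G (structure)
  assumes sg: "\<sigma> \<in> Gal_Qab" and one: "\<one> \<in> S"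
    and cj: "\<forall>y\<in>S. x \<otimes> y \<otimes> inv x \<in> S" and cj1: "x \<otimes> \<one> \<otimes> inv x = \<one>"
    and cr: "\<forall>y\<in>S. c y \<in> roots_of_unity"
    and cN: "\<forall>y\<in>S. \<forall>n\<in>N. c (n \<otimes> y) = c y"
    and cN2: "\<forall>y\<in>S. \<forall>n\<in>N. c (x \<otimes> (n \<otimes> y) \<otimes> inv x) = c (x \<otimes> y \<otimes> inv x)"
    and c1: "c \<one> = 1"
    and ent: "entries_in_Qab S P"
    and car: "\<forall>y\<in>S. P y \<in> carrier_mat (dim_row (P \<one>)) (dim_row (P \<one>))"
  shows "is_mu G S N P x \<sigma> \<mu> \<Longrightarrow> is_mu G S N (\<lambda>y. c y \<cdot>\<^sub>m P y) x \<sigma> (\<lambda>y. \<sigma> (c (x \<otimes> y \<otimes> inv x)) / c y * \<mu> y)"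
    and "is_mu G S N (\<lambda>y. c y \<cdot>\<^sub>m P y) x \<sigma> \<mu>1 \<Longrightarrow>
       is_mu G S N P x \<sigma> (\<lambda>y. \<sigma> (inverse (c (x \<otimes> y \<otimes> inv x))) / inverse (c y) * \<mu>1 y)"
proof -
  assume m: "is_mu G S N P x \<sigma> \<mu>"
  show "is_mu G S N (\<lambda>y. c y \<cdot>\<^sub>m P y) x \<sigma> (\<lambda>y. \<sigma> (c (x \<otimes> y \<otimes> inv x)) / c y * \<mu> y)"
    by (rule mu_scale[OF sg one cj cj1 _ cr cN cN2 c1 ent car m]) simp
next
  assume m: "is_mu G S N (\<lambda>y. c y \<cdot>\<^sub>m P y) x \<sigma> \<mu>1"
  have cnz: "\<forall>y\<in>S. c y \<noteq> 0" using cr root_nz by auto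
  show "is_mu G S N P x \<sigma> (\<lambda>y. \<sigma> (inverse (c (x \<otimes> y \<otimes> inv x))) / inverse (c y) * \<mu>1 y)"
  proof (rule mu_scale[OF sg one cj cj1 _ _ _ _ _ _ _ m])
    show "\<forall>y\<in>S. P y = inverse (c y) \<cdot>\<^sub>m (c y \<cdot>\<^sub>m P y)" using cnz by (simp add: smult_smult_mat smult_one_mat)
    show "\<forall>y\<in>S. inverse (c y) \<in> roots_of_unity" using cr root_inv by auto
    show "\<forall>y\<in>S. \<forall>n\<in>N. inverse (c (n \<otimes> y)) = inverse (c y)" using cN by simp
    show "\<forall>y\<in>S. \<forall>n\<in>N. inverse (c (x \<otimes> (n \<otimes> y) \<otimes> inv x)) = inverse (c (x \<otimes> y \<otimes> inv x))" using cN2 by simp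
    show "inverse (c \<one>) = 1" using c1 by simp
    show "entries_in_Qab S (\<lambda>y. c y \<cdot>\<^sub>m P y)" using entries_scale[OF ent] cr roots_Qab by auto
    show "\<forall>y\<in>S. c y \<cdot>\<^sub>m P y \<in> carrier_mat (dim_row (c \<one> \<cdot>\<^sub>m P \<one>)) (dim_row (c \<one> \<cdot>\<^sub>m P \<one>))"
      using car by simp
  qed
qed


lemma lemma1p6_aux:
  fixes G :: "('g, 'b) monoid_scheme" (structure) and p :: nat
    and N H M :: "'g set" and \<theta> \<phi> :: "'g \<Rightarrow> complex"
    and P P' :: "'g \<Rightarrow> complex mat" and \<epsilon> :: "'g \<Rightarrow> complex"
  assumes "prime p" and "group G" and "finite (carrier G)"
    and "ge_c G p N \<theta> H M \<phi> P P'"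
    and "\<forall>x\<in>stab G (carrier G) N \<theta>. \<epsilon> x \<in> roots_of_unity"
    and "\<forall>x\<in>stab G (carrier G) N \<theta>. \<forall>n\<in>N. \<epsilon> (n \<otimes>\<^bsub>G\<^esub> x) = \<epsilon> x"
    and "\<epsilon> \<one>\<^bsub>G\<^esub> = 1"
  shows "ge_c G p N \<theta> H M \<phi> (\<lambda>x. \<epsilon> x \<cdot>\<^sub>m P x) (\<lambda>x. \<epsilon> x \<cdot>\<^sub>m P' x)"
proof -
  interpret group G by fact
  define SG where "SG = stab G (carrier G) N \<theta>"
  define SH where "SH = stab G H M \<phi>"
  define SHN where "SHN = stab G H N \<theta>"
  note ge = assms(4)[unfolded ge_c_def]
  have T1: "H_triple G p (carrier G) N \<theta>" and T2: "H_triple G p H M \<phi>" and HG: "subgroup H G"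
    and i1: "carrier G = N <#> H" and i2: "N \<inter> H = M" and i3: "centralizer_of G N \<subseteq> H"
    and ii: "stab_pairs G H (Hcal p) N \<theta> = stab_pairs G H (Hcal p) M \<phi>"
    using ge by blast+
  have NG: "subgroup N G" and nor1: "\<forall>k\<in>carrier G. \<forall>n\<in>N. k \<otimes> n \<otimes> inv k \<in> N"
    using T1 unfolding H_triple_def by blast+
  have MG: "subgroup M G" and nor2: "\<forall>k\<in>H. \<forall>n\<in>M. k \<otimes> n \<otimes> inv k \<in> M"
    using T2 unfolding H_triple_def by blast+
  have CG: "subgroup (carrier G) G" by (rule subgroup_self)
  have MN: "M \<subseteq> N" using i2 by blast
  have Hc: "H \<subseteq> carrier G" using subgroup.subset[OF HG] .
  have Nc: "N \<subseteq> carrier G" using subgroup.subset[OF NG] .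
  have SH_eq: "SH = SHN"
  proof -
    have "y \<in> SH \<longleftrightarrow> (y, id) \<in> stab_pairs G H (Hcal p) M \<phi>" for y
      unfolding SH_def stab_def stab_pairs_def using id_Hcal by auto
    moreover have "y \<in> SHN \<longleftrightarrow> (y, id) \<in> stab_pairs G H (Hcal p) N \<theta>" for y
      unfolding SHN_def stab_def stab_pairs_def using id_Hcal by auto
    ultimately show ?thesis using ii by blast
  qed
  have SHN_SG: "SHN \<subseteq> SG" unfolding SHN_def SG_def stab_def using Hc by auto
  have SH_SG: "SH \<subseteq> SG" using SH_eq SHN_SG by simp
  have oneSG: "\<one> \<in> SG" unfolding SG_def stab_def using Nc by auto
  have oneSH: "\<one> \<in> SH" unfolding SH_def stab_def using subgroup.one_closed[OF HG] subgroup.subset[OF MG] by auto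
  have SGm: "\<forall>x\<in>SG. \<forall>y\<in>SG. x \<otimes> y \<in> SG" unfolding SG_def using stab_mult[OF CG NG nor1] by blast
  have SHm: "\<forall>x\<in>SH. \<forall>y\<in>SH. x \<otimes> y \<in> SH" unfolding SH_def using stab_mult[OF HG MG nor2] by blast
  have SGc: "SG \<subseteq> carrier G" unfolding SG_def stab_def by auto
  have er: "\<forall>x\<in>SG. \<epsilon> x \<in> roots_of_unity" using assms(5) SG_def by simp
  have eN: "\<forall>x\<in>SG. \<forall>n\<in>N. \<epsilon> (n \<otimes> x) = \<epsilon> x" using assms(6) SG_def by simp
  have e1: "\<epsilon> \<one> = 1" using assms(7) .
  have enz: "\<forall>x\<in>SG. \<epsilon> x \<noteq> 0" using er root_nz by auto
  have eQ: "\<forall>x\<in>SG. \<epsilon> x \<in> Qab" using er roots_Qab by auto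
  have eN1: "\<forall>n\<in>N. \<epsilon> n = 1"
  proof
    fix n assume n: "n \<in> N"
    have "\<epsilon> (n \<otimes> \<one>) = \<epsilon> \<one>" using eN oneSG n by blast
    thus "\<epsilon> n = 1" using n Nc e1 by auto
  qed
  have eN2: "\<forall>x\<in>SG. \<forall>n\<in>N. \<epsilon> (x \<otimes> n) = \<epsilon> x"
  proof (intro ballI)
    fix x n assume x: "x \<in> SG" and n: "n \<in> N"
    have "x \<otimes> n = (x \<otimes> n \<otimes> inv x) \<otimes> x" using swap_conj x n SGc Nc by auto
    moreover have "x \<otimes> n \<otimes> inv x \<in> N" using nor1 x n SGc by auto
    ultimately show "\<epsilon> (x \<otimes> n) = \<epsilon> x" using eN x by metis
  qed
  obtain d d' \<alpha> \<alpha>' where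
    pr: "proj_rep G SG d P \<alpha>" and as: "assoc_with G SG N \<theta> d P" and
    pr': "proj_rep G SH d' P' \<alpha>'" and as': "assoc_with G SH M \<phi> d' P'" and
    en: "entries_in_Qab SG P" and en': "entries_in_Qab SH P'" and
    ar: "\<forall>x\<in>SG. \<forall>y\<in>SG. \<alpha> x y \<in> roots_of_unity" and
    ar': "\<forall>x\<in>SH. \<forall>y\<in>SH. \<alpha>' x y \<in> roots_of_unity" and
    aeq: "\<forall>x\<in>SHN. \<forall>y\<in>SHN. \<alpha> x y = \<alpha>' x y" and
    cen: "\<forall>c\<in>centralizer_of G N. \<exists>s. P c = s \<cdot>\<^sub>m 1\<^sub>m d \<and> P' c = s \<cdot>\<^sub>m 1\<^sub>m d'"
    using ge unfolding SG_def SH_def SHN_def by blast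
  have iv: "\<forall>x \<sigma>. (x, \<sigma>) \<in> stab_pairs G H (Hcal p) N \<theta> \<longrightarrow>
        (\<exists>\<mu> \<mu>'. is_mu G SG N P x \<sigma> \<mu> \<and> is_mu G SH M P' x \<sigma> \<mu>') \<and>
        (\<forall>\<mu> \<mu>'. is_mu G SG N P x \<sigma> \<mu> \<longrightarrow> is_mu G SH M P' x \<sigma> \<mu>' \<longrightarrow>
           (\<forall>y\<in>SHN. \<mu> y = \<mu>' y))"
    using ge unfolding SG_def SH_def SHN_def by blast
  have Pc: "\<forall>y\<in>SG. P y \<in> carrier_mat d d" using pr unfolding proj_rep_def by auto
  have Pc': "\<forall>y\<in>SH. P' y \<in> carrier_mat d' d'" using pr' unfolding proj_rep_def by auto
  have P1: "dim_row (P \<one>) = d" using Pc oneSG by auto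
  have P1': "dim_row (P' \<one>) = d'" using Pc' oneSH by auto
  have iii: "\<exists>d d' \<alpha> \<alpha>'.
        proj_rep G SG d (\<lambda>x. \<epsilon> x \<cdot>\<^sub>m P x) \<alpha> \<and> assoc_with G SG N \<theta> d (\<lambda>x. \<epsilon> x \<cdot>\<^sub>m P x) \<and>
        proj_rep G SH d' (\<lambda>x. \<epsilon> x \<cdot>\<^sub>m P' x) \<alpha>' \<and> assoc_with G SH M \<phi> d' (\<lambda>x. \<epsilon> x \<cdot>\<^sub>m P' x) \<and>
        entries_in_Qab SG (\<lambda>x. \<epsilon> x \<cdot>\<^sub>m P x) \<and> entries_in_Qab SH (\<lambda>x. \<epsilon> x \<cdot>\<^sub>m P' x) \<and>
        (\<forall>x\<in>SG. \<forall>y\<in>SG. \<alpha> x y \<in> roots_of_unity) \<and>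
        (\<forall>x\<in>SH. \<forall>y\<in>SH. \<alpha>' x y \<in> roots_of_unity) \<and>
        (\<forall>x\<in>SHN. \<forall>y\<in>SHN. \<alpha> x y = \<alpha>' x y) \<and>
        (\<forall>c\<in>centralizer_of G N. \<exists>s. \<epsilon> c \<cdot>\<^sub>m P c = s \<cdot>\<^sub>m 1\<^sub>m d \<and> \<epsilon> c \<cdot>\<^sub>m P' c = s \<cdot>\<^sub>m 1\<^sub>m d')"
  proof (intro exI conjI)
    show "proj_rep G SG d (\<lambda>x. \<epsilon> x \<cdot>\<^sub>m P x) (\<lambda>x y. \<epsilon> x * \<epsilon> y / \<epsilon> (x \<otimes> y) * \<alpha> x y)"
      using proj_scale[OF pr enz SGm] .
    show "proj_rep G SH d' (\<lambda>x. \<epsilon> x \<cdot>\<^sub>m P' x) (\<lambda>x y. \<epsilon> x * \<epsilon> y / \<epsilon> (x \<otimes> y) * \<alpha>' x y)"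
      using proj_scale[OF pr'] enz SH_SG SHm by blast
    show "assoc_with G SG N \<theta> d (\<lambda>x. \<epsilon> x \<cdot>\<^sub>m P x)"
    proof (rule assoc_scale[OF as Pc eN1])
      show "\<forall>n\<in>N. \<forall>g\<in>SG. \<epsilon> (n \<otimes> g) = \<epsilon> g \<and> \<epsilon> (g \<otimes> n) = \<epsilon> g" using eN eN2 by blast
      show "\<epsilon> \<one> = 1" by (rule e1)
      show "\<forall>x\<in>N. \<forall>y\<in>N. x \<otimes> y \<in> N" using subgroup.m_closed[OF NG] by blast
    qed
    show "assoc_with G SH M \<phi> d' (\<lambda>x. \<epsilon> x \<cdot>\<^sub>m P' x)"
    proof (rule assoc_scale[OF as' Pc'])
      show "\<epsilon> \<one> = 1" by (rule e1)
      show "\<forall>n\<in>M. \<epsilon> n = 1" using eN1 MN by blast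
      show "\<forall>n\<in>M. \<forall>g\<in>SH. \<epsilon> (n \<otimes> g) = \<epsilon> g \<and> \<epsilon> (g \<otimes> n) = \<epsilon> g" using eN eN2 MN SH_SG by blast
      show "\<forall>x\<in>M. \<forall>y\<in>M. x \<otimes> y \<in> M" using subgroup.m_closed[OF MG] by blast
    qed
    show "entries_in_Qab SG (\<lambda>x. \<epsilon> x \<cdot>\<^sub>m P x)" using entries_scale[OF en] eQ by blast
    show "entries_in_Qab SH (\<lambda>x. \<epsilon> x \<cdot>\<^sub>m P' x)" using entries_scale[OF en'] eQ SH_SG by blast
    show "\<forall>x\<in>SG. \<forall>y\<in>SG. \<epsilon> x * \<epsilon> y / \<epsilon> (x \<otimes> y) * \<alpha> x y \<in> roots_of_unity"
      using er ar SGm by (simp add: divide_inverse root_mult root_inv)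
    show "\<forall>x\<in>SH. \<forall>y\<in>SH. \<epsilon> x * \<epsilon> y / \<epsilon> (x \<otimes> y) * \<alpha>' x y \<in> roots_of_unity"
      using er ar' SHm SH_SG by (simp add: divide_inverse root_mult root_inv subset_iff)
    show "\<forall>x\<in>SHN. \<forall>y\<in>SHN. \<epsilon> x * \<epsilon> y / \<epsilon> (x \<otimes> y) * \<alpha> x y = \<epsilon> x * \<epsilon> y / \<epsilon> (x \<otimes> y) * \<alpha>' x y"
      using aeq by simp
    show "\<forall>c\<in>centralizer_of G N. \<exists>s. \<epsilon> c \<cdot>\<^sub>m P c = s \<cdot>\<^sub>m 1\<^sub>m d \<and> \<epsilon> c \<cdot>\<^sub>m P' c = s \<cdot>\<^sub>m 1\<^sub>m d'"
    proof
      fix c assume "c \<in> centralizer_of G N"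
      then obtain s where "P c = s \<cdot>\<^sub>m 1\<^sub>m d" "P' c = s \<cdot>\<^sub>m 1\<^sub>m d'" using cen by blast
      thus "\<exists>s. \<epsilon> c \<cdot>\<^sub>m P c = s \<cdot>\<^sub>m 1\<^sub>m d \<and> \<epsilon> c \<cdot>\<^sub>m P' c = s \<cdot>\<^sub>m 1\<^sub>m d'"
        by (intro exI[of _ "\<epsilon> c * s"]) (simp add: smult_smult_mat)
    qed
  qed
  have iv': "\<forall>x \<sigma>. (x, \<sigma>) \<in> stab_pairs G H (Hcal p) N \<theta> \<longrightarrow>
        (\<exists>\<mu> \<mu>'. is_mu G SG N (\<lambda>x. \<epsilon> x \<cdot>\<^sub>m P x) x \<sigma> \<mu> \<and> is_mu G SH M (\<lambda>x. \<epsilon> x \<cdot>\<^sub>m P' x) x \<sigma> \<mu>') \<and>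
        (\<forall>\<mu> \<mu>'. is_mu G SG N (\<lambda>x. \<epsilon> x \<cdot>\<^sub>m P x) x \<sigma> \<mu> \<longrightarrow> is_mu G SH M (\<lambda>x. \<epsilon> x \<cdot>\<^sub>m P' x) x \<sigma> \<mu>' \<longrightarrow>
           (\<forall>y\<in>SHN. \<mu> y = \<mu>' y))"
  proof (intro allI impI)
    fix x \<sigma> assume xs: "(x, \<sigma>) \<in> stab_pairs G H (Hcal p) N \<theta>"
    have xs2: "(x, \<sigma>) \<in> stab_pairs G H (Hcal p) M \<phi>" using xs ii by simp
    have xH: "x \<in> H" and sH: "\<sigma> \<in> Hcal p" and xth: "\<forall>n\<in>N. \<sigma> (\<theta> (x \<otimes> n \<otimes> inv x)) = \<theta> n"
      using xs unfolding stab_pairs_def by auto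
    have xph: "\<forall>n\<in>M. \<sigma> (\<phi> (x \<otimes> n \<otimes> inv x)) = \<phi> n" using xs2 unfolding stab_pairs_def by auto
    have sg: "\<sigma> \<in> Gal_Qab" using sH unfolding Hcal_def by auto
    have inj: "inj \<sigma>" using gal_inj[OF sg] .
    have xc: "x \<in> carrier G" using xH Hc by auto
    have cj1: "x \<otimes> \<one> \<otimes> inv x = \<one>" using xc by simp
    have cjG: "\<forall>y\<in>SG. x \<otimes> y \<otimes> inv x \<in> SG" unfolding SG_def using stab_conj[OF CG NG nor1 xc inj xth] by blast
    have cjH: "\<forall>y\<in>SH. x \<otimes> y \<otimes> inv x \<in> SH" unfolding SH_def using stab_conj[OF HG MG nor2 xH inj xph] by blast
    have cN2G: "\<forall>y\<in>SG. \<forall>n\<in>N. \<epsilon> (x \<otimes> (n \<otimes> y) \<otimes> inv x) = \<epsilon> (x \<otimes> y \<otimes> inv x)"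
    proof (intro ballI)
      fix y n assume y: "y \<in> SG" and n: "n \<in> N"
      have "x \<otimes> (n \<otimes> y) \<otimes> inv x = (x \<otimes> n \<otimes> inv x) \<otimes> (x \<otimes> y \<otimes> inv x)"
        using conj_prod[OF xc] n Nc y SGc by (simp add: subset_iff)
      moreover have "x \<otimes> n \<otimes> inv x \<in> N" using nor1 xc n by auto
      moreover have "x \<otimes> y \<otimes> inv x \<in> SG" using cjG y by blast
      ultimately show "\<epsilon> (x \<otimes> (n \<otimes> y) \<otimes> inv x) = \<epsilon> (x \<otimes> y \<otimes> inv x)" using eN by metis
    qed
    have cN2H: "\<forall>y\<in>SH. \<forall>n\<in>M. \<epsilon> (x \<otimes> (n \<otimes> y) \<otimes> inv x) = \<epsilon> (x \<otimes> y \<otimes> inv x)"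
      using cN2G SH_SG MN by blast
    have erH: "\<forall>y\<in>SH. \<epsilon> y \<in> roots_of_unity" using er SH_SG by blast
    have eNH: "\<forall>y\<in>SH. \<forall>n\<in>M. \<epsilon> (n \<otimes> y) = \<epsilon> y" using eN SH_SG MN by blast
    have carG: "\<forall>y\<in>SG. P y \<in> carrier_mat (dim_row (P \<one>)) (dim_row (P \<one>))" using Pc P1 by simp
    have carH: "\<forall>y\<in>SH. P' y \<in> carrier_mat (dim_row (P' \<one>)) (dim_row (P' \<one>))" using Pc' P1' by simp
    note packG = mu_pack[OF sg oneSG cjG cj1 er eN cN2G e1 en carG]
    note packH = mu_pack[OF sg oneSH cjH cj1 erH eNH cN2H e1 en' carH]
    obtain \<mu> \<mu>' where m: "is_mu G SG N P x \<sigma> \<mu>" and m': "is_mu G SH M P' x \<sigma> \<mu>'"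
      using iv xs by blast
    have ex: "(\<exists>\<mu> \<mu>'. is_mu G SG N (\<lambda>x. \<epsilon> x \<cdot>\<^sub>m P x) x \<sigma> \<mu> \<and> is_mu G SH M (\<lambda>x. \<epsilon> x \<cdot>\<^sub>m P' x) x \<sigma> \<mu>')"
      using packG(1)[OF m] packH(1)[OF m'] by blast
    have un: "(\<forall>\<mu> \<mu>'. is_mu G SG N (\<lambda>x. \<epsilon> x \<cdot>\<^sub>m P x) x \<sigma> \<mu> \<longrightarrow> is_mu G SH M (\<lambda>x. \<epsilon> x \<cdot>\<^sub>m P' x) x \<sigma> \<mu>' \<longrightarrow>
           (\<forall>y\<in>SHN. \<mu> y = \<mu>' y))"
    proof (intro allI impI ballI)
      fix \<mu>1 \<mu>1' y assume m1: "is_mu G SG N (\<lambda>x. \<epsilon> x \<cdot>\<^sub>m P x) x \<sigma> \<mu>1"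
        and m1': "is_mu G SH M (\<lambda>x. \<epsilon> x \<cdot>\<^sub>m P' x) x \<sigma> \<mu>1'" and y: "y \<in> SHN"
      have "\<forall>y\<in>SHN. \<sigma> (inverse (\<epsilon> (x \<otimes> y \<otimes> inv x))) / inverse (\<epsilon> y) * \<mu>1 y =
                     \<sigma> (inverse (\<epsilon> (x \<otimes> y \<otimes> inv x))) / inverse (\<epsilon> y) * \<mu>1' y"
        using iv xs packG(2)[OF m1] packH(2)[OF m1'] by blast
      hence eq: "\<sigma> (inverse (\<epsilon> (x \<otimes> y \<otimes> inv x))) / inverse (\<epsilon> y) * \<mu>1 y =
                     \<sigma> (inverse (\<epsilon> (x \<otimes> y \<otimes> inv x))) / inverse (\<epsilon> y) * \<mu>1' y" using y by blast
      have ySG: "y \<in> SG" using y SHN_SG by auto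
      have "x \<otimes> y \<otimes> inv x \<in> SG" using cjG ySG by auto
      hence "\<sigma> (inverse (\<epsilon> (x \<otimes> y \<otimes> inv x))) \<noteq> 0" using enz gal_nz[OF sg] by auto
      moreover have "inverse (\<epsilon> y) \<noteq> 0" using enz ySG by auto
      ultimately show "\<mu>1 y = \<mu>1' y" using eq by simp
    qed
    show "(\<exists>\<mu> \<mu>'. is_mu G SG N (\<lambda>x. \<epsilon> x \<cdot>\<^sub>m P x) x \<sigma> \<mu> \<and> is_mu G SH M (\<lambda>x. \<epsilon> x \<cdot>\<^sub>m P' x) x \<sigma> \<mu>') \<and>
        (\<forall>\<mu> \<mu>'. is_mu G SG N (\<lambda>x. \<epsilon> x \<cdot>\<^sub>m P x) x \<sigma> \<mu> \<longrightarrow> is_mu G SH M (\<lambda>x. \<epsilon> x \<cdot>\<^sub>m P' x) x \<sigma> \<mu>' \<longrightarrow>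
           (\<forall>y\<in>SHN. \<mu> y = \<mu>' y))" using ex un by blast
  qed
  show ?thesis unfolding ge_c_def
    using T1 T2 HG i1 i2 i3 ii iii iv' unfolding SG_def SH_def SHN_def by blast
qed
theorem lemma1p6:
  fixes G :: "('g, 'b) monoid_scheme" and p :: nat
    and N H M :: "'g set" and \<theta> \<phi> :: "'g \<Rightarrow> complex"
    and P P' :: "'g \<Rightarrow> complex mat" and \<epsilon> :: "'g \<Rightarrow> complex"
  assumes "prime p" and "group G" and "finite (carrier G)"
    and "ge_c G p N \<theta> H M \<phi> P P'"
    and "\<forall>x\<in>stab G (carrier G) N \<theta>. \<epsilon> x \<in> roots_of_unity"
    and "\<forall>x\<in>stab G (carrier G) N \<theta>. \<forall>n\<in>N. \<epsilon> (n \<otimes>\<^bsub>G\<^esub> x) = \<epsilon> x"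
    and "\<epsilon> \<one>\<^bsub>G\<^esub> = 1"
  shows "ge_c G p N \<theta> H M \<phi> (\<lambda>x. \<epsilon> x \<cdot>\<^sub>m P x) (\<lambda>x. \<epsilon> x \<cdot>\<^sub>m P' x)"
  by (rule lemma1p6_aux[OF assms])

end
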